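(* Let $\mathcal{T}$ be an increasing tree of depth $D$, i.e. $c(u)\le c(v)$ whenever $u$ is an ancestor of $v$. Then the online algorithm \textsc{Noadd} is $D$-competitive for MLAPD on $\mathcal{T}$: for every request set $\mathcal{R}$, the total cost of the schedule produced by \textsc{Noadd} is at most $D$ times the cost of an optimal (offline) schedule.
   Context: Multi-level aggregation problem with deadlines (MLAPD): an instance is a rooted tree $\mathcal{T}$ with root $r$ and positive node costs $c(v)>0$, together with a set $\mathcal{R}$ of requests $\rho=(v,a,d)$, each issued at a node $v$, with arrival time $a$ and deadline $d\ge a$ (deadlines are assumed distinct). A service is a pair $(S,t)$ where $S$ is a subtree of $\mathcal{T}$ containing $r$ (so if $v\in S$ then all ancestors of $v$ are in $S$) and $t$ is the transmission time; it costs $c(S)=\sum_{u\in S}c(u)$. A request $(v,a,d)$ is satisfied by $(S,t)$ if $v\in S$ and $a\le t\le d$. A schedule is a set of services; it is feasible if every request is satisfied by some service; its cost is the sum of its services' costs. Online: requests are revealed at their arrival times, the tree is known in advance. The depth $D$ is the maximum number of nodes on a root-to-leaf path. For a request $\rho$ issued at $v$, $P_\rho$ denotes the set of nodes on the path from $r$ to $v$. An algorithm is $c$-competitive if its cost is at most $c$ times the optimal cost on every instance. \textsc{Noadd}: whenever a request $\rho$ that has not yet been satisfied by a previous transmission reaches its deadline $d_\rho$, it transmits the service $(P_\rho,d_\rho)$ and nothing else. *)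

theory Defs
  imports Main "HOL.Real"
begin

definition rooted_tree :: "'v set \<Rightarrow> ('v \<Rightarrow> 'v) \<Rightarrow> 'v \<Rightarrow> bool" where
  "rooted_tree V par r \<longleftrightarrow> finite V \<and> r \<in> V \<and> (\<forall>v\<in>V. v \<noteq> r \<longrightarrow> par v \<in> V)
     \<and> (\<forall>v\<in>V. \<exists>k. (par ^^ k) v = r)"

definition root_dist :: "('v \<Rightarrow> 'v) \<Rightarrow> 'v \<Rightarrow> 'v \<Rightarrow> nat" where
  "root_dist par r v = (LEAST k. (par ^^ k) v = r)"

definition path_to :: "('v \<Rightarrow> 'v) \<Rightarrow> 'v \<Rightarrow> 'v \<Rightarrow> 'v set" where
  "path_to par r v = {(par ^^ k) v | k. k \<le> root_dist par r v}"

definition depth :: "'v set \<Rightarrow> ('v \<Rightarrow> 'v) \<Rightarrow> 'v \<Rightarrow> nat" where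
  "depth V par r = Max ((\<lambda>v. card (path_to par r v)) ` V)"

definition increasing_tree :: "'v set \<Rightarrow> ('v \<Rightarrow> 'v) \<Rightarrow> 'v \<Rightarrow> ('v \<Rightarrow> real) \<Rightarrow> bool" where
  "increasing_tree V par r c \<longleftrightarrow> (\<forall>v\<in>V. \<forall>u\<in>path_to par r v. c u \<le> c v)"

type_synonym 'v request = "'v \<times> real \<times> real"

definition req_node :: "'v request \<Rightarrow> 'v" where "req_node \<rho> = fst \<rho>"
definition req_arr :: "'v request \<Rightarrow> real" where "req_arr \<rho> = fst (snd \<rho>)"
definition req_dl :: "'v request \<Rightarrow> real" where "req_dl \<rho> = snd (snd \<rho>)"

definition valid_requests :: "'v set \<Rightarrow> 'v request set \<Rightarrow> bool" where
  "valid_requests V R \<longleftrightarrow> finite R \<and> (\<forall>\<rho>\<in>R. req_node \<rho> \<in> V \<and> req_arr \<rho> \<le> req_dl \<rho>)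
     \<and> inj_on req_dl R"

text \<open>Services (S, t): S a subtree containing the root, t the transmission time.\<close>
type_synonym 'v service = "'v set \<times> real"

definition valid_service :: "'v set \<Rightarrow> ('v \<Rightarrow> 'v) \<Rightarrow> 'v \<Rightarrow> 'v service \<Rightarrow> bool" where
  "valid_service V par r s \<longleftrightarrow> fst s \<subseteq> V \<and> r \<in> fst s \<and> (\<forall>v\<in>fst s. path_to par r v \<subseteq> fst s)"

definition service_cost :: "('v \<Rightarrow> real) \<Rightarrow> 'v service \<Rightarrow> real" where
  "service_cost c s = (\<Sum>u\<in>fst s. c u)"

definition satisfies :: "'v service \<Rightarrow> 'v request \<Rightarrow> bool" where
  "satisfies s \<rho> \<longleftrightarrow> req_node \<rho> \<in> fst s \<and> req_arr \<rho> \<le> snd s \<and> snd s \<le> req_dl \<rho>"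

definition schedule_cost :: "('v \<Rightarrow> real) \<Rightarrow> 'v service set \<Rightarrow> real" where
  "schedule_cost c sch = (\<Sum>s\<in>sch. service_cost c s)"

text \<open>A feasible schedule: a finite set of (valid) services satisfying every request.
  (Infinite schedules have infinite cost and are irrelevant for the bound.)\<close>
definition feasible_schedule :: "'v set \<Rightarrow> ('v \<Rightarrow> 'v) \<Rightarrow> 'v \<Rightarrow> 'v request set \<Rightarrow> 'v service set \<Rightarrow> bool" where
  "feasible_schedule V par r R sch \<longleftrightarrow> finite sch \<and> (\<forall>s\<in>sch. valid_service V par r s)
     \<and> (\<forall>\<rho>\<in>R. \<exists>s\<in>sch. satisfies s \<rho>)"

text \<open>Noadd: process requests in increasing deadline order; the list T holds the requests
  whose deadline triggered a transmission (P_rho, d_rho) so far.\<close>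
fun noadd_aux :: "('v \<Rightarrow> 'v) \<Rightarrow> 'v \<Rightarrow> 'v request list \<Rightarrow> 'v request list \<Rightarrow> 'v request list" where
  "noadd_aux par r T [] = T"
| "noadd_aux par r T (\<rho> # rs) =
     (if (\<exists>\<rho>'\<in>set T. satisfies (path_to par r (req_node \<rho>'), req_dl \<rho>') \<rho>)
      then noadd_aux par r T rs
      else noadd_aux par r (T @ [\<rho>]) rs)"

definition noadd_schedule :: "('v \<Rightarrow> 'v) \<Rightarrow> 'v \<Rightarrow> 'v request set \<Rightarrow> 'v service set" where
  "noadd_schedule par r R =
     (\<lambda>\<rho>. (path_to par r (req_node \<rho>), req_dl \<rho>)) `
       set (noadd_aux par r [] (sorted_key_list_of_set req_dl R))"

end

theory Submission imports Defs begin

definition good :: "('v \<Rightarrow> 'v) \<Rightarrow> 'v \<Rightarrow> 'v request list \<Rightarrow> bool" where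
  "good par r T \<longleftrightarrow> (\<forall>x\<in>set T. \<forall>y\<in>set T. req_dl x < req_dl y \<longrightarrow>
      \<not> satisfies (path_to par r (req_node x), req_dl x) y)"

lemma noadd_aux_good:
  assumes "sorted_wrt (\<lambda>x y. req_dl x < req_dl y) L"
    and "\<forall>x\<in>set T. \<forall>y\<in>set L. req_dl x < req_dl y"
    and "good par r T"
  shows "good par r (noadd_aux par r T L) \<and> set (noadd_aux par r T L) \<subseteq> set T \<union> set L"
  using assms
proof (induction L arbitrary: T)
  case Nil
  then show ?case by simp
next
  case (Cons a L)
  show ?case
  proof (cases "\<exists>\<rho>'\<in>set T. satisfies (path_to par r (req_node \<rho>'), req_dl \<rho>') a")
    case True
    have "good par r (noadd_aux par r T L) \<and> set (noadd_aux par r T L) \<subseteq> set T \<union> set L"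
      using Cons by (intro Cons.IH) auto
    then show ?thesis using True by auto
  next
    case False
    have g: "good par r (T @ [a])"
      using Cons.prems(2,3) False unfolding good_def by fastforce
    have "good par r (noadd_aux par r (T@[a]) L) \<and> set (noadd_aux par r (T@[a]) L) \<subseteq> set (T@[a]) \<union> set L"
      using Cons g by (intro Cons.IH) auto
    then show ?thesis using False by auto
  qed
qed

lemma eqi: "linorder.insort_key ((\<le>)::real\<Rightarrow>real\<Rightarrow>bool) = insort_key"
proof (intro ext)
  fix f :: "'b \<Rightarrow> real" and x xs
  show "linorder.insort_key (\<le>) f x xs = insort_key f x xs"
    by (induction xs) (simp_all add: linorder.insort_key.simps[OF linorder_class.linorder_axioms])
qed

lemma eqk: "linorder.sorted_key_list_of_set ((\<le>)::real\<Rightarrow>real\<Rightarrow>bool) = sorted_key_list_of_set"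
  by (rule ext)+ (simp add: eqi sorted_key_list_of_set_def linorder.sorted_key_list_of_set_def[OF linorder_class.linorder_axioms])

lemma list_props:
  assumes "valid_requests V R"
  shows "set (sorted_key_list_of_set req_dl R) = R"
    and "sorted_wrt (\<lambda>x y. req_dl x < req_dl y) (sorted_key_list_of_set req_dl R)"
proof -
  have fin: "finite R" and inj: "inj_on req_dl R" using assms unfolding valid_requests_def by auto
  have loc: "folding_insort_key ((\<le>)::real\<Rightarrow>real\<Rightarrow>bool) (<) R req_dl"
    using inj by unfold_locales
  show "set (sorted_key_list_of_set req_dl R) = R"
    by (rule folding_insort_key.set_sorted_key_list_of_set[where S=R and less_eq="(\<le>)::real\<Rightarrow>real\<Rightarrow>bool" and less="(<)", unfolded eqk, OF loc order_refl fin])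
  have d: "distinct (map req_dl (sorted_key_list_of_set req_dl R))"
    by (rule folding_insort_key.distinct_sorted_key_list_of_set[where S=R and less_eq="(\<le>)::real\<Rightarrow>real\<Rightarrow>bool" and less="(<)", unfolded eqk, OF loc order_refl])
  have s: "sorted (map req_dl (sorted_key_list_of_set req_dl R))"
    by (rule folding_insort_key.sorted_sorted_key_list_of_set[where S=R and less_eq="(\<le>)::real\<Rightarrow>real\<Rightarrow>bool" and less="(<)", unfolded eqk, OF loc order_refl])
  have "sorted_wrt (<) (map req_dl (sorted_key_list_of_set req_dl R))"
    unfolding strict_sorted_iff using d s by simp
  then show "sorted_wrt (\<lambda>x y. req_dl x < req_dl y) (sorted_key_list_of_set req_dl R)"
    by (simp add: sorted_wrt_map)
qed

theorem mainTheorem1: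
  fixes V :: "'v set" and par :: "'v \<Rightarrow> 'v" and r :: 'v and c :: "'v \<Rightarrow> real"
    and R :: "'v request set" and sch :: "'v service set"
  assumes "rooted_tree V par r"
    and "\<forall>v\<in>V. c v > 0"
    and "increasing_tree V par r c"
    and "valid_requests V R"
    and "feasible_schedule V par r R sch"
  shows "schedule_cost c (noadd_schedule par r R) \<le> real (depth V par r) * schedule_cost c sch"
proof -
  define L where "L = sorted_key_list_of_set req_dl R"
  define T where "T = noadd_aux par r [] L"
  have gT: "good par r T" and sT: "set T \<subseteq> R"
    using noadd_aux_good[of L "[]" par r] list_props[OF assms(4)]
    unfolding T_def L_def good_def by auto
  have finV: "finite V" using assms(1) unfolding rooted_tree_def by auto
  have Rprops: "\<And>\<rho>. \<rho> \<in> R \<Longrightarrow> req_node \<rho> \<in> V" and injR: "inj_on req_dl R"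
    using assms(4) unfolding valid_requests_def by auto
  let ?P = "\<lambda>\<rho>. path_to par r (req_node \<rho>)"
  have finP: "finite (path_to par r v)" for v
  proof -
    have "path_to par r v = (\<lambda>k. (par ^^ k) v) ` {..root_dist par r v}"
      unfolding path_to_def by auto
    then show ?thesis by simp
  qed
  have inj1: "inj_on (\<lambda>\<rho>. (?P \<rho>, req_dl \<rho>)) (set T)"
    using injR sT by (auto simp: inj_on_def)
  have cost1: "schedule_cost c (noadd_schedule par r R) = (\<Sum>\<rho>\<in>set T. (\<Sum>u\<in>?P \<rho>. c u))"
    unfolding noadd_schedule_def schedule_cost_def T_def[symmetric] L_def[symmetric]
    by (simp add: sum.reindex[OF inj1] service_cost_def)
  have step1: "(\<Sum>u\<in>?P \<rho>. c u) \<le> real (depth V par r) * c (req_node \<rho>)" if "\<rho> \<in> set T" for \<rho>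
  proof -
    have v: "req_node \<rho> \<in> V" using that sT Rprops by blast
    have "(\<Sum>u\<in>?P \<rho>. c u) \<le> (\<Sum>u\<in>?P \<rho>. c (req_node \<rho>))"
      using assms(3) v unfolding increasing_tree_def by (intro sum_mono) auto
    also have "\<dots> = real (card (?P \<rho>)) * c (req_node \<rho>)" by simp
    also have "\<dots> \<le> real (depth V par r) * c (req_node \<rho>)"
    proof (rule mult_right_mono)
      show "real (card (?P \<rho>)) \<le> real (depth V par r)"
        unfolding depth_def using finV v by (auto intro!: Max_ge)
      show "0 \<le> c (req_node \<rho>)" using assms(2) v by auto
    qed
    finally show ?thesis .
  qed
  have fsch: "finite sch" and vs: "\<forall>s\<in>sch. valid_service V par r s"
    and satf: "\<forall>\<rho>\<in>R. \<exists>s\<in>sch. satisfies s \<rho>"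
    using assms(5) unfolding feasible_schedule_def by auto
  define g where "g = (\<lambda>\<rho>. (SOME s. s \<in> sch \<and> satisfies s \<rho>, req_node \<rho>))"
  have g_in: "g \<rho> \<in> Sigma sch fst" "satisfies (fst (g \<rho>)) \<rho>" if "\<rho> \<in> set T" for \<rho>
  proof -
    have "\<exists>s. s \<in> sch \<and> satisfies s \<rho>" using satf sT that by (meson subsetD)
    then have "(SOME s. s \<in> sch \<and> satisfies s \<rho>) \<in> sch \<and> satisfies (SOME s. s \<in> sch \<and> satisfies s \<rho>) \<rho>"
      by (rule someI_ex)
    then show "g \<rho> \<in> Sigma sch fst" "satisfies (fst (g \<rho>)) \<rho>"
      unfolding g_def by (auto simp: satisfies_def)
  qed
  have injg: "inj_on g (set T)"
  proof (rule inj_onI)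
    fix x y assume x: "x \<in> set T" and y: "y \<in> set T" and e: "g x = g y"
    show "x = y"
    proof (rule ccontr)
      assume "x \<noteq> y"
      then have ne: "req_dl x \<noteq> req_dl y" using injR sT x y by (auto simp: inj_on_def)
      have sx: "satisfies (fst (g x)) x" and sy: "satisfies (fst (g x)) y"
        using g_in x y e by metis+
      have nd: "req_node x = req_node y" using e unfolding g_def by auto
      have self: "\<And>z. z \<in> set T \<Longrightarrow> req_node z \<in> path_to par r (req_node z)"
        unfolding path_to_def by (auto intro: exI[where x=0])
      show False
      proof (cases "req_dl x < req_dl y")
        case True
        have "satisfies (?P x, req_dl x) y"
          using sx sy nd self[OF x] True unfolding satisfies_def by auto
        then show False using gT x y True unfolding good_def by blast
      next
        case False
        then have lt: "req_dl y < req_dl x" using ne by auto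
        have "satisfies (?P y, req_dl y) x"
          using sx sy nd self[OF y] lt unfolding satisfies_def by auto
        then show False using gT x y lt unfolding good_def by blast
      qed
    qed
  qed
  have sigV: "\<And>p. p \<in> Sigma sch fst \<Longrightarrow> snd p \<in> V"
    using vs unfolding valid_service_def by fastforce
  have finS: "finite (Sigma sch fst)"
  proof (rule finite_SigmaI[OF fsch])
    fix s assume "s \<in> sch"
    then have "fst s \<subseteq> V" using vs unfolding valid_service_def by blast
    then show "finite (fst s)" using finV by (rule finite_subset)
  qed
  have "(\<Sum>\<rho>\<in>set T. c (req_node \<rho>)) = (\<Sum>p\<in>g ` set T. c (snd p))"
    using sum.reindex[OF injg, of "\<lambda>p. c (snd p)"] by (simp add: g_def)
  also have "\<dots> \<le> (\<Sum>p\<in>Sigma sch fst. c (snd p))"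
  proof (rule sum_mono2[OF finS])
    show "g ` set T \<subseteq> Sigma sch fst" using g_in(1) by blast
    show "0 \<le> c (snd p)" if "p \<in> Sigma sch fst - g ` set T" for p
      using sigV[of p] that assms(2) by (auto intro: less_imp_le)
  qed
  also have "\<dots> = schedule_cost c sch"
  proof -
    have "\<forall>s\<in>sch. finite (fst s)"
    proof
      fix s assume "s \<in> sch"
      then have "fst s \<subseteq> V" using vs unfolding valid_service_def by blast
      then show "finite (fst s)" using finV by (rule finite_subset)
    qed
    then show ?thesis
      unfolding schedule_cost_def service_cost_def
      using sum.Sigma[OF fsch, of fst "\<lambda>s u. c u"] by (simp add: split_def)
  qed
  finally have opt: "(\<Sum>\<rho>\<in>set T. c (req_node \<rho>)) \<le> schedule_cost c sch" .
  have "schedule_cost c (noadd_schedule par r R) \<le> (\<Sum>\<rho>\<in>set T. real (depth V par r) * c (req_node \<rho>))"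
    unfolding cost1 by (intro sum_mono step1)
  also have "\<dots> = real (depth V par r) * (\<Sum>\<rho>\<in>set T. c (req_node \<rho>))"
    by (simp add: sum_distrib_left)
  also have "\<dots> \<le> real (depth V par r) * schedule_cost c sch"
    using opt by (intro mult_left_mono) auto
  finally show ?thesis .
qed

end
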